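(* For any traversal sequence $\tau$, distance metric $d$, and sequence of tasks $w^1,\ldots,w^n$, let $C^{A2}=w^{A2}+d^{A2}$ be the total cost (processing cost plus transition cost) of the "follow the traversal" algorithm, and $C^T=w^T+d^T$ the total cost (processing cost plus transition cost) of the fractional traversal algorithm on that sequence of tasks. Then $C^{A2}\leq 2\cdot C^T$.
   Context: Setting: a metrical task system with state set $S=\{1,\ldots,m\}$ and a symmetric nonnegative distance $d$ on $S$ with $d_{ss}=0$ satisfying the triangle inequality. A task is a vector $w=(w_1,\ldots,w_m)$ of nonnegative reals; $w_s$ is the cost of processing the task in state $s$. A traversal sequence $\tau=\tau_1,\tau_2,\ldots$ is an infinite sequence of states (states may repeat). The traversal distance between indices $\ell,\ell'$ is $\delta_{\ell,\ell'}=\delta_{\ell',\ell}=\sum_{j=\min(\ell,\ell')}^{\max(\ell,\ell')-1} d_{\tau_j,\tau_{j+1}}$. Fractional traversal algorithm (Borodin–Linial–Saks): it keeps a current index $j$ in $\tau$ (starting at $t_0=1$) and the work $\rho_j$ expended at position $j$ since arriving there. On task $w^i$ it processes fractions of the task in state $\tau_j$; whenever the work done at position $j$ reaches $d_{\tau_j,\tau_{j+1}}$ it moves to position $j+1$ (paying $d_{\tau_j,\tau_{j+1}}$) and resets $\rho$ to $0$, continuing until the whole task is done. Let $t_i$ be its index after task $i$, and $\lambda^i_j$ the fraction of task $i$ processed at position $j$ ($\sum_j\lambda^i_j=1$). Its cost on task $i$ is $\delta_{t_{i-1},t_i}+\sum_{j=t_{i-1}}^{t_i}\lambda^i_j w^i_{\tau_j}$.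 "Follow the traversal" algorithm: it keeps an index $\ell_{i-1}$ in $\tau$ ($\ell_0=1$) and simulates the fractional traversal algorithm (index $t_{i-1}$). On task $w^i$, let $j_{\min}=\min(\ell_{i-1},t_{i-1})$, $j_{\max}=\max(\ell_{i-1},t_{i-1})$, and define $\tilde c(j)=w^i_{\tau_j}$ if $j_{\min}\le j\le j_{\max}$, $\tilde c(j)=w^i_{\tau_j}+\delta_{j_{\max},j}$ if $j>j_{\max}$, and $\tilde c(j)=\infty$ otherwise. It sets $\ell_i\in\arg\min_{j\ge j_{\min}}\tilde c(j)$ (ties broken arbitrarily), moves from state $\tau_{\ell_{i-1}}$ to state $\tau_{\ell_i}$ (paying $d_{\tau_{\ell_{i-1}},\tau_{\ell_i}}$) and processes the whole task there (paying $w^i_{\tau_{\ell_i}}$). *)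

theory Defs
  imports Complex_Main
begin

text \<open>States form a finite type 'a (so S = UNIV with m = CARD('a)).
  A traversal sequence is tau :: nat => 'a, used at indices 1,2,3,...
  Tasks are w :: nat => 'a => real, task i (1 <= i <= n) being w i.\<close>

definition metric_dist :: "('a \<Rightarrow> 'a \<Rightarrow> real) \<Rightarrow> bool" where
  "metric_dist d \<longleftrightarrow>
     (\<forall>s. d s s = 0) \<and> (\<forall>s s'. 0 \<le> d s s' \<and> d s s' = d s' s) \<and>
     (\<forall>s s' s''. d s s'' \<le> d s s' + d s' s'')"

definition trav_dist :: "(nat \<Rightarrow> 'a) \<Rightarrow> ('a \<Rightarrow> 'a \<Rightarrow> real) \<Rightarrow> nat \<Rightarrow> nat \<Rightarrow> real" where
  "trav_dist tau d l l' = (\<Sum>j\<in>{min l l'..<max l l'}. d (tau j) (tau (Suc j)))"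

text \<open>Runs of the fractional traversal algorithm on tasks 1..n:
  t i is the index after task i, lam i j the fraction of task i processed at position j.
  The work done at a position that is left during task i equals exactly the distance to the
  next position; the work done at the position where the algorithm rests after a task is
  strictly below that distance (the algorithm moves as soon as the work reaches it).\<close>
definition frac_traversal_run ::
  "(nat \<Rightarrow> 'a) \<Rightarrow> ('a \<Rightarrow> 'a \<Rightarrow> real) \<Rightarrow> (nat \<Rightarrow> 'a \<Rightarrow> real) \<Rightarrow> nat
    \<Rightarrow> (nat \<Rightarrow> nat) \<Rightarrow> (nat \<Rightarrow> nat \<Rightarrow> real) \<Rightarrow> bool" where
  "frac_traversal_run tau d w n t lam \<longleftrightarrow>
     t 0 = 1 \<and>
     (\<forall>i\<in>{1..n}.
        t (i - 1) \<le> t i \<and>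
        (\<forall>j. 0 \<le> lam i j) \<and>
        (\<forall>j. j < t (i - 1) \<or> t i < j \<longrightarrow> lam i j = 0) \<and>
        (\<Sum>j\<in>{t (i - 1)..t i}. lam i j) = 1 \<and>
        (\<forall>j. t (i - 1) \<le> j \<and> j < t i \<longrightarrow>
             (\<Sum>k\<in>{1..i}. lam k j * w k (tau j)) = d (tau j) (tau (Suc j))) \<and>
        (\<Sum>k\<in>{1..i}. lam k (t i) * w k (tau (t i))) < d (tau (t i)) (tau (Suc (t i))))"

definition frac_proc_cost ::
  "(nat \<Rightarrow> 'a) \<Rightarrow> (nat \<Rightarrow> 'a \<Rightarrow> real) \<Rightarrow> nat \<Rightarrow> (nat \<Rightarrow> nat) \<Rightarrow> (nat \<Rightarrow> nat \<Rightarrow> real) \<Rightarrow> real" where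
  "frac_proc_cost tau w n t lam =
     (\<Sum>i\<in>{1..n}. \<Sum>j\<in>{t (i - 1)..t i}. lam i j * w i (tau j))"

definition frac_move_cost ::
  "(nat \<Rightarrow> 'a) \<Rightarrow> ('a \<Rightarrow> 'a \<Rightarrow> real) \<Rightarrow> nat \<Rightarrow> (nat \<Rightarrow> nat) \<Rightarrow> real" where
  "frac_move_cost tau d n t = (\<Sum>i\<in>{1..n}. trav_dist tau d (t (i - 1)) (t i))"

text \<open>The modified cost c~(j) of "follow the traversal" for task i, given l_{i-1} = lp and
  t_{i-1} = tp; only used for j >= min lp tp (it is infinite otherwise).\<close>
definition ftt_ctilde ::
  "(nat \<Rightarrow> 'a) \<Rightarrow> ('a \<Rightarrow> 'a \<Rightarrow> real) \<Rightarrow> (nat \<Rightarrow> 'a \<Rightarrow> real) \<Rightarrow> nat \<Rightarrow> nat \<Rightarrow> nat \<Rightarrow> nat \<Rightarrow> real" where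
  "ftt_ctilde tau d w i lp tp j =
     (if j \<le> max lp tp then w i (tau j) else w i (tau j) + trav_dist tau d (max lp tp) j)"

text \<open>Runs of "follow the traversal" (ties broken arbitrarily), given the simulated
  fractional traversal indices t.\<close>
definition ftt_run ::
  "(nat \<Rightarrow> 'a) \<Rightarrow> ('a \<Rightarrow> 'a \<Rightarrow> real) \<Rightarrow> (nat \<Rightarrow> 'a \<Rightarrow> real) \<Rightarrow> nat
    \<Rightarrow> (nat \<Rightarrow> nat) \<Rightarrow> (nat \<Rightarrow> nat) \<Rightarrow> bool" where
  "ftt_run tau d w n t l \<longleftrightarrow>
     l 0 = 1 \<and>
     (\<forall>i\<in>{1..n}.
        min (l (i - 1)) (t (i - 1)) \<le> l i \<and>
        (\<forall>j. min (l (i - 1)) (t (i - 1)) \<le> j \<longrightarrow>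
             ftt_ctilde tau d w i (l (i - 1)) (t (i - 1)) (l i)
               \<le> ftt_ctilde tau d w i (l (i - 1)) (t (i - 1)) j))"

definition ftt_proc_cost :: "(nat \<Rightarrow> 'a) \<Rightarrow> (nat \<Rightarrow> 'a \<Rightarrow> real) \<Rightarrow> nat \<Rightarrow> (nat \<Rightarrow> nat) \<Rightarrow> real" where
  "ftt_proc_cost tau w n l = (\<Sum>i\<in>{1..n}. w i (tau (l i)))"

definition ftt_move_cost :: "(nat \<Rightarrow> 'a) \<Rightarrow> ('a \<Rightarrow> 'a \<Rightarrow> real) \<Rightarrow> nat \<Rightarrow> (nat \<Rightarrow> nat) \<Rightarrow> real" where
  "ftt_move_cost tau d n l = (\<Sum>i\<in>{1..n}. d (tau (l (i - 1))) (tau (l i)))"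

end

theory Submission
  imports Defs
begin

lemma X_split: "(a::nat) \<le> b \<Longrightarrow> (\<Sum>k<b. f k) = (\<Sum>k<a. f k) + (\<Sum>k\<in>{a..<b}. (f k::real))"
  by (induction b) (auto simp: le_Suc_eq)

lemma arith_step:
  fixes a b c e w W :: real
  assumes "b \<le> c" "min a b \<le> e" "0 \<le> W" "0 \<le> w"
    and "w + max (e - max a b) 0 \<le> W + max (c - max a b) 0"
  shows "\<bar>e - a\<bar> + w + \<bar>e - c\<bar> - \<bar>a - b\<bar> \<le> 2 * ((c - b) + W)"
  using assms by (smt (verit))

lemma X_mono:
  assumes "\<And>k. 0 \<le> (D k::real)" "(a::nat) \<le> b"
  shows "(\<Sum>k<a. D k) \<le> (\<Sum>k<b. D k)"
  using X_split[OF assms(2), of D] assms(1) by (simp add: sum_nonneg)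

lemma trav_abs:
  fixes tau :: "nat \<Rightarrow> 'a" and d
  assumes "metric_dist d"
  defines "X \<equiv> \<lambda>j. (\<Sum>k<j. d (tau k) (tau (Suc k)))"
  shows "trav_dist tau d p q = \<bar>X p - X q\<bar>"
proof -
  have nn: "\<And>k. 0 \<le> d (tau k) (tau (Suc k))" using assms(1) unfolding metric_dist_def by blast
  have "X (max p q) = X (min p q) + trav_dist tau d p q"
    unfolding X_def trav_dist_def by (rule X_split) simp
  moreover have "X (min p q) \<le> X (max p q)" unfolding X_def by (rule X_mono[OF nn]) simp
  ultimately show ?thesis by (cases "p \<le> q") (auto simp: max_def min_def)
qed

lemma tri_path:
  fixes tau :: "nat \<Rightarrow> 'a" and d
  assumes "metric_dist d" "a \<le> b"
  shows "d (tau a) (tau b) \<le> (\<Sum>k<b. d (tau k) (tau (Suc k))) - (\<Sum>k<a. d (tau k) (tau (Suc k)))"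
  using assms(2)
proof (induction b)
  case 0
  then show ?case using assms(1) unfolding metric_dist_def by simp
next
  case (Suc b)
  show ?case
  proof (cases "a = Suc b")
    case True
    then show ?thesis using assms(1) unfolding metric_dist_def by simp
  next
    case False
    then have "a \<le> b" using Suc by simp
    then have "d (tau a) (tau b) \<le> (\<Sum>k<b. d (tau k) (tau (Suc k))) - (\<Sum>k<a. d (tau k) (tau (Suc k)))"
      using Suc by simp
    moreover have "d (tau a) (tau (Suc b)) \<le> d (tau a) (tau b) + d (tau b) (tau (Suc b))"
      using assms(1) unfolding metric_dist_def by blast
    ultimately show ?thesis by simp
  qed
qed

lemma tri_abs:
  fixes tau :: "nat \<Rightarrow> 'a" and d
  assumes "metric_dist d"
  defines "X \<equiv> \<lambda>j. (\<Sum>k<j. d (tau k) (tau (Suc k)))"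
  shows "d (tau a) (tau b) \<le> \<bar>X a - X b\<bar>"
proof (cases "a \<le> b")
  case True
  then show ?thesis using tri_path[where tau=tau, OF assms(1) True] unfolding X_def by simp
next
  case False
  then have "b \<le> a" by simp
  from tri_path[where tau=tau, OF assms(1) this] have "d (tau b) (tau a) \<le> X a - X b" unfolding X_def by simp
  moreover have "d (tau a) (tau b) = d (tau b) (tau a)" using assms(1) unfolding metric_dist_def by blast
  ultimately show ?thesis by simp
qed

theorem theorem3:
  fixes tau :: "nat \<Rightarrow> 'a::finite"
    and d :: "'a \<Rightarrow> 'a \<Rightarrow> real"
    and w :: "nat \<Rightarrow> 'a \<Rightarrow> real"
    and n :: nat
    and t :: "nat \<Rightarrow> nat" and lam :: "nat \<Rightarrow> nat \<Rightarrow> real"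
    and l :: "nat \<Rightarrow> nat"
  assumes "metric_dist d"
    and "\<forall>i\<in>{1..n}. \<forall>s. 0 \<le> w i s"
    and "frac_traversal_run tau d w n t lam"
    and "ftt_run tau d w n t l"
  shows "ftt_proc_cost tau w n l + ftt_move_cost tau d n l
           \<le> 2 * (frac_proc_cost tau w n t lam + frac_move_cost tau d n t)"
proof -
  define X where "X \<equiv> \<lambda>j. (\<Sum>k<j. d (tau k) (tau (Suc k)))"
  have nn: "\<And>k. 0 \<le> d (tau k) (tau (Suc k))" using assms(1) unfolding metric_dist_def by blast
  have Xm: "\<And>a b. a \<le> b \<Longrightarrow> X a \<le> X b" unfolding X_def by (rule X_mono[OF nn])
  have td: "\<And>p q. trav_dist tau d p q = \<bar>X p - X q\<bar>" unfolding X_def by (rule trav_abs[OF assms(1)])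
  have dd: "\<And>p q. d (tau p) (tau q) \<le> \<bar>X p - X q\<bar>" unfolding X_def by (rule tri_abs[OF assms(1)])
  define A where "A i = w i (tau (l i)) + d (tau (l (i - 1))) (tau (l i))" for i
  define T where "T i = (\<Sum>j\<in>{t (i - 1)..t i}. lam i j * w i (tau j)) + trav_dist tau d (t (i - 1)) (t i)" for i
  have step: "A i + \<bar>X (l i) - X (t i)\<bar> - \<bar>X (l (i-1)) - X (t (i-1))\<bar> \<le> 2 * T i"
    if i: "i \<in> {1..n}" for i
  proof -
    let ?lp = "l (i - 1)" and ?tp = "t (i - 1)" and ?ln = "l i" and ?tn = "t i"
    let ?M = "max ?lp ?tp"
    define W where "W = (\<Sum>j\<in>{?tp..?tn}. lam i j * w i (tau j))"
    have tle: "?tp \<le> ?tn" and lnn: "\<forall>j. 0 \<le> lam i j" and ls: "(\<Sum>j\<in>{?tp..?tn}. lam i j) = 1"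
      using assms(3) i unfolding frac_traversal_run_def by blast+
    have lmin: "min ?lp ?tp \<le> ?ln"
      and lopt: "\<And>j. min ?lp ?tp \<le> j \<Longrightarrow> ftt_ctilde tau d w i ?lp ?tp ?ln \<le> ftt_ctilde tau d w i ?lp ?tp j"
      using assms(4) i unfolding ftt_run_def by blast+
    have wn: "\<And>s. 0 \<le> w i s" using assms(2) i by blast
    have XM: "X ?M = max (X ?lp) (X ?tp)"
    proof (cases "?lp \<le> ?tp")
      case True then show ?thesis using Xm[OF True] by (simp add: max_def)
    next
      case False then have "?tp \<le> ?lp" by simp
      then show ?thesis using Xm[OF \<open>?tp \<le> ?lp\<close>] by (simp add: max_def)
    qed
    have ct: "ftt_ctilde tau d w i ?lp ?tp j = w i (tau j) + max (X j - X ?M) 0" for j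
    proof (cases "j \<le> ?M")
      case True
      then show ?thesis using Xm[OF True] unfolding ftt_ctilde_def by simp
    next
      case False
      then have "?M \<le> j" by linarith
      then have "X ?M \<le> X j" using Xm by blast
      then show ?thesis using False unfolding ftt_ctilde_def td by simp
    qed
    have "ftt_ctilde tau d w i ?lp ?tp ?ln = (\<Sum>j\<in>{?tp..?tn}. lam i j * ftt_ctilde tau d w i ?lp ?tp ?ln)"
      using ls by (simp add: sum_distrib_right[symmetric])
    also have "\<dots> \<le> (\<Sum>j\<in>{?tp..?tn}. lam i j * ftt_ctilde tau d w i ?lp ?tp j)"
      by (rule sum_mono, rule mult_left_mono) (use lopt lnn in auto)
    also have "\<dots> \<le> (\<Sum>j\<in>{?tp..?tn}. lam i j * w i (tau j) + lam i j * max (X ?tn - X ?M) 0)"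
    proof (rule sum_mono)
      fix j assume "j \<in> {?tp..?tn}"
      then have "X j \<le> X ?tn" using Xm by simp
      then have "max (X j - X ?M) 0 \<le> max (X ?tn - X ?M) 0" by simp
      then show "lam i j * ftt_ctilde tau d w i ?lp ?tp j \<le> lam i j * w i (tau j) + lam i j * max (X ?tn - X ?M) 0"
        unfolding ct using lnn by (simp add: distrib_left mult_left_mono)
    qed
    also have "\<dots> = W + max (X ?tn - X ?M) 0"
      unfolding W_def sum.distrib using ls by (simp add: sum_distrib_right[symmetric])
    finally have key: "w i (tau ?ln) + max (X ?ln - X ?M) 0 \<le> W + max (X ?tn - X ?M) 0"
      unfolding ct .
    have W0: "0 \<le> W" unfolding W_def using lnn wn by (simp add: sum_nonneg)
    have e: "min (X ?lp) (X ?tp) \<le> X ?ln" using Xm[OF lmin] by (simp add: min_def split: if_splits)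
    have ar: "\<bar>X ?ln - X ?lp\<bar> + w i (tau ?ln) + \<bar>X ?ln - X ?tn\<bar> - \<bar>X ?lp - X ?tp\<bar> \<le> 2 * ((X ?tn - X ?tp) + W)"
      by (rule arith_step) (use Xm[OF tle] e W0 wn key XM in auto)
    have "A i \<le> w i (tau ?ln) + \<bar>X ?ln - X ?lp\<bar>"
      unfolding A_def using dd[of ?lp ?ln] by simp
    moreover have "T i = W + (X ?tn - X ?tp)" unfolding T_def W_def td using Xm[OF tle] by simp
    ultimately show ?thesis using ar by simp
  qed
  have main: "k \<le> n \<Longrightarrow> (\<Sum>i\<in>{1..k}. A i) + \<bar>X (l k) - X (t k)\<bar> \<le> 2 * (\<Sum>i\<in>{1..k}. T i)" for k
  proof (induction k)
    case 0
    have "l 0 = 1" using assms(4) unfolding ftt_run_def by blast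
    moreover have "t 0 = 1" using assms(3) unfolding frac_traversal_run_def by blast
    ultimately show ?case by simp
  next
    case (Suc k)
    then have "A (Suc k) + \<bar>X (l (Suc k)) - X (t (Suc k))\<bar> - \<bar>X (l k) - X (t k)\<bar> \<le> 2 * T (Suc k)"
      using step[of "Suc k"] by simp
    with Suc show ?case by simp
  qed
  have "(\<Sum>i\<in>{1..n}. A i) \<le> 2 * (\<Sum>i\<in>{1..n}. T i)" using main[of n] by simp
  then show ?thesis
    unfolding ftt_proc_cost_def ftt_move_cost_def frac_proc_cost_def frac_move_cost_def A_def T_def
    by (simp add: sum.distrib)
qed

end
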